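(* Let $f(z)=\lambda z+bz^2+z^3$ have a Siegel disk $\Delta(f)$ around $0$. Then for every compact set $\widetilde K\subset\Delta(f)$ there exists $\delta(\widetilde K)>0$ such that $\widetilde K\subset A(f_\varepsilon)$ for every $0<\varepsilon<\delta(\widetilde K)$.
   Context: For $f(z)=\lambda z+bz^2+z^3$ with $|\lambda|\le1$ and $\varepsilon>0$, $f_\varepsilon(z)=(1-\varepsilon)\lambda z+bz^2+z^3$. For a map $g$ with attracting fixed point $0$, $A(g)$ denotes the immediate basin of attraction of $0$. A Siegel disk around $0$ is the maximal neighborhood of the irrationally indifferent fixed point $0$ on which $f$ is analytically conjugate to a rotation. *)

theory Defs
  imports "HOL-Analysis.Analysis"
begin

definition cubic :: "complex \<Rightarrow> complex \<Rightarrow> complex \<Rightarrow> complex" where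
  "cubic lam b z = lam * z + b * z^2 + z^3"

definition perturbed :: "complex \<Rightarrow> complex \<Rightarrow> real \<Rightarrow> complex \<Rightarrow> complex" where
  "perturbed lam b eps z = (1 - complex_of_real eps) * lam * z + b * z^2 + z^3"

definition irrationally_indifferent :: "complex \<Rightarrow> bool" where
  "irrationally_indifferent lam \<longleftrightarrow>
     (\<exists>\<theta>::real. \<theta> \<notin> \<rat> \<and> lam = exp (2 * pi * \<i> * complex_of_real \<theta>))"

definition linearization_domain ::
  "(complex \<Rightarrow> complex) \<Rightarrow> complex \<Rightarrow> complex set \<Rightarrow> bool" where
  "linearization_domain g lam U \<longleftrightarrow>
     open U \<and> connected U \<and> 0 \<in> U \<and>
     (\<exists>\<phi> r. r > 0 \<and> \<phi> holomorphic_on U \<and> bij_betw \<phi> U (ball 0 r) \<and> \<phi> 0 = 0 \<and>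
        (\<forall>z\<in>U. g z \<in> U \<and> \<phi> (g z) = lam * \<phi> z))"

definition siegel_disk ::
  "(complex \<Rightarrow> complex) \<Rightarrow> complex \<Rightarrow> complex set \<Rightarrow> bool" where
  "siegel_disk g lam \<Delta> \<longleftrightarrow>
     g 0 = 0 \<and> (g has_field_derivative lam) (at 0) \<and> irrationally_indifferent lam \<and>
     linearization_domain g lam \<Delta> \<and>
     (\<forall>U. linearization_domain g lam U \<longrightarrow> U \<subseteq> \<Delta>)"

definition basin :: "(complex \<Rightarrow> complex) \<Rightarrow> complex set" where
  "basin g = {z. (\<lambda>n. (g ^^ n) z) \<longlonglongrightarrow> 0}"

definition immediate_basin :: "(complex \<Rightarrow> complex) \<Rightarrow> complex set" where
  "immediate_basin g = connected_component_set (basin g) 0"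

end

theory Submission
  imports Defs "HOL-Complex_Analysis.Complex_Analysis"
begin


lemma sums_norm_le:
  fixes f :: "nat \<Rightarrow> 'a::banach"
  assumes "f sums s" "g sums T" "\<And>n. norm (f n) \<le> g n"
  shows "norm s \<le> T"
proof -
  have sg: "summable g" using assms(2) sums_summable by blast
  have sn: "summable (\<lambda>n. norm (f n))"
    by (rule summable_comparison_test'[OF sg]) (use assms(3) in auto)
  have "norm s = norm (suminf f)" using assms(1) sums_unique by metis
  also have "\<dots> \<le> (\<Sum>n. norm (f n))" by (rule summable_norm[OF sn])
  also have "\<dots> \<le> suminf g" by (rule suminf_le[OF assms(3) sn sg])
  also have "\<dots> = T" using assms(2) sums_unique by metis
  finally show ?thesis .
qed

lemma taylor2_bound:
  fixes h :: "complex \<Rightarrow> complex"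
  assumes hol: "h holomorphic_on ball 0 R" and bd: "\<And>e. e \<in> ball 0 R \<Longrightarrow> norm (h e) \<le> M"
    and "0 < \<rho>" "\<rho> < R" and e: "norm e < \<rho>"
  shows "norm (h e - h 0 - deriv h 0 * e) \<le> M * (norm e / \<rho>)^2 / (1 - norm e / \<rho>)"
proof -
  define c where "c n = (deriv ^^ n) h 0 / fact n" for n
  have sm: "(\<lambda>n. c n * e^n) sums h e"
    using holomorphic_power_series[OF hol, of e] e \<open>\<rho> < R\<close> by (simp add: c_def)
  have ci: "norm ((deriv ^^ n) h 0) \<le> fact n * M / \<rho>^n" for n
  proof (rule Cauchy_inequality)
    show "h holomorphic_on ball 0 \<rho>" using \<open>\<rho> < R\<close> by (intro holomorphic_on_subset[OF hol]) auto
    show "continuous_on (cball 0 \<rho>) h"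
      using \<open>\<rho> < R\<close> by (intro holomorphic_on_imp_continuous_on holomorphic_on_subset[OF hol]) auto
    show "0 < \<rho>" by fact
    show "norm (h x) \<le> M" if "norm (0 - x) = \<rho>" for x using that bd \<open>\<rho> < R\<close> by auto
  qed
  define x where "x = norm e / \<rho>"
  have x0: "0 \<le> x" "x < 1" using e \<open>0 < \<rho>\<close> by (auto simp: x_def)
  have cb: "norm (c n * e^n) \<le> M * x^n" for n
  proof -
    have "norm (c n * e^n) = norm ((deriv ^^ n) h 0) / fact n * norm e ^ n"
      by (simp add: c_def norm_mult norm_divide norm_power)
    also have "\<dots> \<le> (fact n * M / \<rho>^n) / fact n * norm e ^ n"
      by (intro mult_right_mono divide_right_mono ci) auto
    also have "\<dots> = M * x^n" by (simp add: x_def power_divide)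
    finally show ?thesis .
  qed
  have c0: "c 0 = h 0" and c1: "c 1 = deriv h 0" by (auto simp: c_def)
  have s2: "(\<lambda>n. c (n+2) * e^(n+2)) sums (h e - (\<Sum>n<2. c n * e^n))"
    using sums_iff_shift[of "\<lambda>n. c n * e^n" 2 "h e - (\<Sum>n<2. c n * e^n)"] sm by simp
  have eq: "(\<Sum>n<2. c n * e^n) = h 0 + deriv h 0 * e"
    by (simp add: numeral_2_eq_2 c_def)
  have g: "(\<lambda>n. M * x^2 * x^n) sums (M * x^2 * (1 / (1 - x)))"
    by (intro sums_mult geometric_sums) (use x0 in auto)
  have "norm (h e - (h 0 + deriv h 0 * e)) \<le> M * x^2 * (1 / (1 - x))"
  proof (rule sums_norm_le[OF s2[unfolded eq] g])
    fix n
    show "norm (c (n+2) * e^(n+2)) \<le> M * x^2 * x^n" using cb[of "n+2"]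
      by (simp add: power_add power2_eq_square mult.assoc)
  qed
  then show ?thesis by (simp add: x_def algebra_simps)
qed

lemma averaging:
  fixes g :: "complex \<Rightarrow> complex" and lam :: complex
  assumes hol: "g holomorphic_on ball 0 R" and t: "0 < t" "t < R" and lam1: "norm lam = 1"
    and nr: "\<And>m::nat. m > 0 \<Longrightarrow> lam^m \<noteq> 1" and g0: "g 0 = 1"
  shows "\<exists>N>0. \<forall>w. norm w \<le> t \<longrightarrow> real N / 2 \<le> Re (\<Sum>k<N. g (lam^k * w))"
proof -
  define t2 where "t2 = (t+R)/2"
  have t2: "t < t2" "t2 < R" using t by (auto simp: t2_def)
  have "compact (g ` cball 0 t2)"
    by (intro compact_continuous_image holomorphic_on_imp_continuous_on holomorphic_on_subset[OF hol]) (use t2 in auto)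
  then have "bounded (g ` cball 0 t2)" by (rule compact_imp_bounded)
  then obtain B where B: "B > 0" "\<And>x. x \<in> cball 0 t2 \<Longrightarrow> norm (g x) \<le> B"
    unfolding bounded_pos by blast
  define c where "c n = (deriv ^^ n) g 0 / fact n" for n
  have cb: "norm (c n) \<le> B / t2^n" for n
  proof -
    have "norm ((deriv ^^ n) g 0) \<le> fact n * B / t2^n"
    proof (rule Cauchy_inequality)
      show "g holomorphic_on ball 0 t2" using t2 by (intro holomorphic_on_subset[OF hol]) auto
      show "continuous_on (cball 0 t2) g"
        using t2 by (intro holomorphic_on_imp_continuous_on holomorphic_on_subset[OF hol]) auto
      show "0 < t2" using t t2 by simp
      show "norm (g x) \<le> B" if "norm (0 - x) = t2" for x using that B by auto
    qed
    then show ?thesis by (simp add: c_def norm_divide field_simps)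
  qed
  define q where "q = t / t2"
  have q: "0 < q" "q < 1" using t t2 by (auto simp: q_def)
  define p where "p = sqrt q"
  have p: "0 < p" "p < 1" "q = p * p" using q by (auto simp: p_def real_sqrt_lt_1_iff)
  have qpow: "q^m = p^m * p^m" for m by (simp add: p(3) power_mult_distrib)
  obtain M0 where M0: "p^M0 < (1-p)/(4*B)"
    using real_arch_pow_inv[of "(1-p)/(4*B)" p] p B by auto
  define M where "M = Suc M0"
  have pM: "p^M \<le> p^M0" unfolding M_def using p by (intro power_decreasing) auto
  have a1: "B * p^M0 < (1-p)/4" using M0 B by (simp add: field_simps)
  have a2: "B * p^M \<le> B * p^M0" by (rule mult_left_mono[OF pM]) (use B in simp)
  have "B * p^M < (1-p)/4" using a1 a2 by linarith
  then have hM: "B * p^M / (1-p) \<le> 1/4" using p by (simp add: field_simps)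
  define \<delta> where "\<delta> = Min ((\<lambda>m. norm (lam^m - 1)) ` {1..M})"
  have \<delta>pos: "\<delta> > 0" unfolding \<delta>_def using nr by (auto simp: M_def)
  have h\<delta>: "\<delta> \<le> norm (lam^m - 1)" if "m \<in> {1..M}" for m
    unfolding \<delta>_def using that by (intro Min_le) auto
  define N where "N = nat \<lceil>8*B/(\<delta>*(1-q))\<rceil> + 1"
  have Npos: "N > 0" by (simp add: N_def)
  have "8*B/(\<delta>*(1-q)) \<le> real N" unfolding N_def by linarith
  then have hN: "(2*B/\<delta>) * (1/(1-q)) \<le> real N / 4" using \<delta>pos q B by (simp add: field_simps)
  have main: "real N / 2 \<le> Re (\<Sum>k<N. g (lam^k * w))" if w: "norm w \<le> t" for w
  proof -
    have sk: "(\<lambda>m. c m * (lam^k*w)^m) sums g (lam^k*w)" for k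
    proof -
      have "lam^k * w \<in> ball 0 R" using w t by (simp add: norm_mult norm_power lam1)
      from holomorphic_power_series[OF hol this] show ?thesis by (simp add: c_def)
    qed
    define T where "T m = (\<Sum>k<N. c m * (lam^k*w)^m)" for m
    define S where "S = (\<Sum>k<N. g (lam^k * w))"
    have TS: "T sums S" unfolding T_def S_def by (rule sums_sum) (rule sk)
    have T0: "T 0 = of_nat N" by (simp add: T_def c_def g0)
    have shift: "(\<lambda>n. T (n+1)) sums (S - of_nat N)"
      using sums_iff_shift[of T 1 "S - of_nat N"] TS T0 by simp
    have Tb: "norm (T (n+1)) \<le> (2*B/\<delta>) * q^n + real N * B * p^M * p^n" for n
    proof -
      define m where "m = n + 1"
      define s where "s = (\<Sum>k<N. (lam^m)^k)"
      have Tm: "T m = c m * w^m * s"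
        by (simp add: T_def s_def sum_distrib_left power_mult_distrib
            flip: power_mult) (simp add: mult.commute mult.left_commute)
      have "norm (T m) \<le> B / t2^m * t^m * norm s"
        unfolding Tm norm_mult norm_power
        by (intro mult_right_mono mult_mono cb power_mono w) (use B t t2 in auto)
      also have "B / t2^m * t^m = B * q^m" by (simp add: q_def power_divide)
      finally have T1: "norm (T m) \<le> B * q^m * norm s" .
      have qmn: "q^m \<le> q^n" unfolding m_def using q by (intro power_decreasing) auto
      show ?thesis
      proof (cases "m \<le> M")
        case True
        have ne: "lam^m \<noteq> 1" by (rule nr) (simp add: m_def)
        have dm: "\<delta> \<le> norm (lam^m - 1)" by (rule h\<delta>) (use True in \<open>simp add: m_def\<close>)
        have "s = ((lam^m)^N - 1) / (lam^m - 1)" unfolding s_def by (rule geometric_sum[OF ne])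
        moreover have "norm ((lam^m)^N - 1) \<le> 2"
          using norm_triangle_ineq4[of "(lam^m)^N" 1] by (simp add: norm_power lam1)
        ultimately have "norm s \<le> 2 / \<delta>"
          using dm \<delta>pos by (simp add: norm_divide) (meson frac_le norm_ge_zero zero_le_numeral)
        then have "norm (T m) \<le> B * q^n * (2/\<delta>)"
        proof -
          have "B * q^m * norm s \<le> B * q^n * norm s"
            using qmn B by (intro mult_right_mono mult_left_mono) auto
          also have "\<dots> \<le> B * q^n * (2/\<delta>)"
            using B q by (intro mult_left_mono \<open>norm s \<le> 2 / \<delta>\<close>) auto
          finally show ?thesis using T1 by linarith
        qed
        moreover have "0 \<le> real N * B * p^M * p^n" using B p by simp
        ultimately show ?thesis unfolding m_def by (simp add: field_simps)
      next
        case False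
        have "norm s \<le> (\<Sum>k<N. norm ((lam^m)^k))" unfolding s_def by (rule norm_sum)
        also have "\<dots> = real N" by (simp add: norm_power lam1)
        finally have ns: "norm s \<le> real N" .
        have "q^m = p^m * p^m" by (rule qpow)
        also have "\<dots> \<le> p^M * p^n"
          using False p unfolding m_def by (intro mult_mono power_decreasing) auto
        finally have "q^m \<le> p^M * p^n" .
        then have "norm (T m) \<le> B * (p^M * p^n) * real N"
        proof -
          have "B * q^m * norm s \<le> B * (p^M * p^n) * norm s"
            using \<open>q^m \<le> p^M * p^n\<close> B by (intro mult_right_mono mult_left_mono) auto
          also have "\<dots> \<le> B * (p^M * p^n) * real N"
            using B p by (intro mult_left_mono ns) auto
          finally show ?thesis using T1 by linarith
        qed
        moreover have "0 \<le> (2*B/\<delta>) * q^n" using B \<delta>pos q by simp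
        ultimately show ?thesis unfolding m_def by (simp add: field_simps)
      qed
    qed
    have gs: "(\<lambda>n. (2*B/\<delta>) * q^n + real N * B * p^M * p^n) sums
               ((2*B/\<delta>) * (1/(1-q)) + real N * B * p^M * (1/(1-p)))"
      by (intro sums_add sums_mult geometric_sums) (use p q in auto)
    have "norm (S - of_nat N) \<le> (2*B/\<delta>) * (1/(1-q)) + real N * B * p^M * (1/(1-p))"
      by (rule sums_norm_le[OF shift gs Tb])
    also have "\<dots> \<le> real N / 4 + real N / 4"
    proof (rule add_mono[OF hN])
      have "real N * B * p^M * (1/(1-p)) = real N * (B * p^M / (1-p))" by simp
      also have "\<dots> \<le> real N * (1/4)" by (rule mult_left_mono[OF hM]) simp
      finally show "real N * B * p^M * (1/(1-p)) \<le> real N / 4" by simp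
    qed
    finally have nb: "norm (S - of_nat N) \<le> real N / 2" by simp
    have "Re (S - of_nat N) \<ge> - norm (S - of_nat N)" using abs_Re_le_cmod[of "S - of_nat N"] by linarith
    then show ?thesis using nb unfolding S_def by simp
  qed
  show ?thesis using Npos main by blast
qed

lemma residues_tendsto:
  fixes y :: "nat \<Rightarrow> 'a::metric_space"
  assumes N: "N > 0" and lim: "\<And>j. j < N \<Longrightarrow> (\<lambda>n. y (n*N + j)) \<longlonglongrightarrow> L"
  shows "y \<longlonglongrightarrow> L"
proof (rule metric_LIMSEQ_I)
  fix r :: real assume r: "r > 0"
  have "\<forall>j\<in>{..<N}. \<exists>n0. \<forall>n\<ge>n0. dist (y (n*N + j)) L < r"
    using lim metric_LIMSEQ_D r by blast
  then obtain n0 where n0: "\<And>j n. j < N \<Longrightarrow> n \<ge> n0 j \<Longrightarrow> dist (y (n*N + j)) L < r"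
    by (metis lessThan_iff)
  define m0 where "m0 = Max (n0 ` {..<N})"
  show "\<exists>no. \<forall>n\<ge>no. dist (y n) L < r"
  proof (intro exI allI impI)
    fix n assume n: "n \<ge> (m0+1)*N"
    have j: "n mod N < N" using N by simp
    have "n div N \<ge> m0 + 1" using n N by (metis div_le_mono div_mult_self_is_m)
    moreover have "n0 (n mod N) \<le> m0" unfolding m0_def using j by (intro Max_ge) auto
    ultimately have "n div N \<ge> n0 (n mod N)" by simp
    from n0[OF j this] show "dist (y n) L < r" by simp
  qed
qed

definition Fp :: "complex \<Rightarrow> complex \<Rightarrow> complex \<Rightarrow> complex \<Rightarrow> complex" where
  "Fp lam b e z = (1 - e) * lam * z + b * z^2 + z^3"

lemma perturbed_Fp: "perturbed lam b eps = Fp lam b (of_real eps)"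
  by (auto simp: perturbed_def Fp_def fun_eq_iff)

lemma cubic_Fp: "cubic lam b = Fp lam b 0"
  by (auto simp: cubic_def Fp_def fun_eq_iff)

lemma Fp_iter_Suc: "(Fp lam b e ^^ Suc k) z = Fp lam b e ((Fp lam b e ^^ k) z)"
  by simp

lemma Fp_iter_zero: "(Fp lam b e ^^ k) 0 = 0"
  by (induction k) (auto simp: Fp_def)

lemma Fp_iter_hol_e: "(\<lambda>e. (Fp lam b e ^^ k) z) holomorphic_on S"
proof (induction k)
  case 0 then show ?case by simp
next
  case (Suc k)
  define X where "X = (\<lambda>e. (Fp lam b e ^^ k) z)"
  have IH: "X holomorphic_on S" unfolding X_def by (rule Suc)
  have eq: "(\<lambda>e. (Fp lam b e ^^ Suc k) z) = (\<lambda>e. (1-e)*lam*X e + b*(X e)^2 + (X e)^3)"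
    by (simp add: X_def Fp_def)
  show ?case unfolding eq by (intro holomorphic_intros IH)
qed

lemma Fp_iter_hol_z: "(\<lambda>z. (Fp lam b e ^^ k) z) holomorphic_on S"
proof (induction k)
  case 0 then show ?case by simp
next
  case (Suc k)
  define X where "X = (\<lambda>z. (Fp lam b e ^^ k) z)"
  have IH: "X holomorphic_on S" unfolding X_def by (rule Suc)
  have eq: "(\<lambda>z. (Fp lam b e ^^ Suc k) z) = (\<lambda>z. (1-e)*lam*X z + b*(X z)^2 + (X z)^3)"
    by (simp add: X_def Fp_def)
  show ?case unfolding eq by (intro holomorphic_intros IH)
qed

lemma Fp_iter_cont: "continuous_on S (\<lambda>p. (Fp lam b (fst p) ^^ k) (snd p))"
proof (induction k)
  case 0 then show ?case by (simp add: continuous_on_snd)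
next
  case (Suc k)
  define X where "X = (\<lambda>p. (Fp lam b (fst p) ^^ k) (snd p))"
  have IH: "continuous_on S X" unfolding X_def by (rule Suc)
  have eq: "(\<lambda>p. (Fp lam b (fst p) ^^ Suc k) (snd p)) = (\<lambda>p. (1 - fst p)*lam*X p + b*(X p)^2 + (X p)^3)"
    by (simp add: X_def Fp_def)
  show ?case unfolding eq by (intro continuous_intros IH)
qed

primrec Dz :: "complex \<Rightarrow> complex \<Rightarrow> complex \<Rightarrow> nat \<Rightarrow> complex" where
  "Dz lam b z 0 = 0"
| "Dz lam b z (Suc k) = (lam + 2*b*(cubic lam b ^^ k) z + 3*((cubic lam b ^^ k) z)^2) * Dz lam b z k
      - lam * (cubic lam b ^^ k) z"

lemma Fp_iter_deriv: "((\<lambda>e. (Fp lam b e ^^ k) z) has_field_derivative Dz lam b z k) (at 0)"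
proof (induction k)
  case 0 then show ?case by simp
next
  case (Suc k)
  define X where "X = (\<lambda>e. (Fp lam b e ^^ k) z)"
  have IH: "(X has_field_derivative Dz lam b z k) (at 0)" unfolding X_def by (rule Suc)
  have x0: "X 0 = (cubic lam b ^^ k) z" by (simp add: cubic_Fp X_def)
  have eq: "(\<lambda>e. (Fp lam b e ^^ Suc k) z) = (\<lambda>e. (1-e)*lam*X e + b*(X e)^2 + (X e)^3)"
    by (simp add: X_def Fp_def)
  show ?case unfolding eq
    by (rule derivative_eq_intros IH refl | simp)+ (simp add: x0 algebra_simps power2_eq_square)
qed

lemma one_minus_bound:
  fixes S :: complex and \<epsilon> a :: real
  assumes "0 \<le> \<epsilon>" "\<epsilon> * a \<le> 1" "a \<le> Re S"
  shows "norm (1 - of_real \<epsilon> * S) \<le> 1 - \<epsilon> * a + \<epsilon>^2 * (norm S)^2 / 2"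
proof (rule power2_le_imp_le)
  have ns: "(norm S)^2 = (Re S)^2 + (Im S)^2" by (simp add: cmod_power2)
  have n1: "(norm (1 - of_real \<epsilon> * S))^2 = (1 - \<epsilon> * Re S)^2 + (\<epsilon> * Im S)^2"
    by (simp add: cmod_power2)
  define x where "x = \<epsilon> * a - \<epsilon>^2 * (norm S)^2 / 2"
  have "x \<le> 1" using assms(2) unfolding x_def by (smt (verit) zero_le_power2 divide_nonneg_pos mult_nonneg_nonneg)
  have "(1 - \<epsilon> * Re S)^2 + (\<epsilon> * Im S)^2 = 1 - 2*\<epsilon>*Re S + \<epsilon>^2 * (norm S)^2"
    unfolding ns by (simp add: power2_eq_square algebra_simps)
  also have "\<dots> \<le> 1 - 2*\<epsilon>*a + \<epsilon>^2 * (norm S)^2"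
    using assms by (simp add: mult_left_mono)
  also have "\<dots> = 1 - 2 * x" by (simp add: x_def)
  also have "\<dots> \<le> (1 - x)^2" by (simp add: power2_eq_square algebra_simps)
  finally show "(norm (1 - of_real \<epsilon> * S))^2 \<le> (1 - \<epsilon> * a + \<epsilon>^2 * (norm S)^2 / 2)^2"
    using n1 by (simp add: x_def algebra_simps)
  show "0 \<le> 1 - \<epsilon> * a + \<epsilon>^2 * (norm S)^2 / 2" using \<open>x \<le> 1\<close> by (simp add: x_def)
qed



theorem corollary4p2:
  fixes lam b :: complex and \<Delta> K :: "complex set"
  assumes "norm lam \<le> 1"
    and "siegel_disk (cubic lam b) lam \<Delta>"
    and "compact K" and "K \<subseteq> \<Delta>"
  shows "\<exists>\<delta>>0. \<forall>eps. 0 < eps \<and> eps < \<delta> \<longrightarrow> K \<subseteq> immediate_basin (perturbed lam b eps)"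
proof -
  have sd: "irrationally_indifferent lam" "linearization_domain (cubic lam b) lam \<Delta>"
    using assms(2) unfolding siegel_disk_def by auto
  obtain \<theta> where th: "\<theta> \<notin> \<rat>" "lam = exp (2 * pi * \<i> * complex_of_real \<theta>)"
    using sd(1) unfolding irrationally_indifferent_def by blast
  have D: "open \<Delta>" "connected \<Delta>" "0 \<in> \<Delta>"
    using sd(2) unfolding linearization_domain_def by auto
  have "\<exists>\<phi> r. r > 0 \<and> \<phi> holomorphic_on \<Delta> \<and> bij_betw \<phi> \<Delta> (ball 0 r) \<and> \<phi> 0 = 0 \<and>
        (\<forall>z\<in>\<Delta>. cubic lam b z \<in> \<Delta> \<and> \<phi> (cubic lam b z) = lam * \<phi> z)"
    using sd(2) unfolding linearization_domain_def by (elim conjE)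
  then obtain \<phi> r where r: "r > 0"
    and \<phi>hol: "\<phi> holomorphic_on \<Delta>" and bij: "bij_betw \<phi> \<Delta> (ball 0 r)" and \<phi>0: "\<phi> 0 = 0"
    and fc': "\<forall>z\<in>\<Delta>. cubic lam b z \<in> \<Delta> \<and> \<phi> (cubic lam b z) = lam * \<phi> z"
    by (elim exE conjE)
  have fc: "cubic lam b z \<in> \<Delta> \<and> \<phi> (cubic lam b z) = lam * \<phi> z" if "z \<in> \<Delta>" for z
    using fc' that by blast
  have lam1: "norm lam = 1" using th(2) by simp
  have lam0: "lam \<noteq> 0" using lam1 by auto
  have nr: "lam^m \<noteq> 1" if "m > 0" for m :: nat
  proof
    assume "lam^m = 1"
    then have "exp (of_nat m * (2 * pi * \<i> * complex_of_real \<theta>)) = 1"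
      by (simp add: exp_of_nat_mult th(2))
    then have "\<exists>n::int. Im (of_nat m * (2 * pi * \<i> * complex_of_real \<theta>)) = of_int (2 * n) * pi"
      unfolding exp_eq_1 by blast
    then obtain n :: int where "real m * (2 * pi * \<theta>) = of_int (2 * n) * pi"
      by auto
    then have "\<theta> = of_int n / of_nat m" using that by (simp add: field_simps)
    then have "\<theta> \<in> \<rat>" by simp
    with th(1) show False by simp
  qed
  have inj: "inj_on \<phi> \<Delta>" and img: "\<phi> ` \<Delta> = ball 0 r" using bij by (auto simp: bij_betw_def)
  obtain \<psi> where \<psi>hol': "\<psi> holomorphic_on \<phi> ` \<Delta>"
    and d\<psi>: "\<And>z. z \<in> \<Delta> \<Longrightarrow> deriv \<phi> z * deriv \<psi> (\<phi> z) = 1"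
    and \<psi>\<phi>: "\<And>z. z \<in> \<Delta> \<Longrightarrow> \<psi> (\<phi> z) = z"
    using holomorphic_has_inverse[OF \<phi>hol D(1) inj] by blast
  have \<psi>hol: "\<psi> holomorphic_on ball 0 r" using \<psi>hol' img by simp
  have \<psi>in: "\<psi> u \<in> \<Delta> \<and> \<phi> (\<psi> u) = u" if "u \<in> ball 0 r" for u
  proof -
    have "u \<in> \<phi> ` \<Delta>" using that img by simp
    then obtain z where z: "z \<in> \<Delta>" "u = \<phi> z" by (rule imageE)
    then show ?thesis using \<psi>\<phi>[OF z(1)] by simp
  qed
  have \<psi>0: "\<psi> 0 = 0" using \<psi>\<phi>[OF D(3)] \<phi>0 by simp
  have \<phi>r: "norm (\<phi> z) < r" if "z \<in> \<Delta>" for z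
  proof -
    have "\<phi> z \<in> ball 0 r" using that img by blast
    then show ?thesis by simp
  qed
  have lamball: "lam^k * u \<in> ball 0 r" if "u \<in> ball 0 r" for k u
    using that by (simp add: norm_mult norm_power lam1)
  have conj: "cubic lam b (\<psi> u) = \<psi> (lam * u)" if "u \<in> ball 0 r" for u
  proof -
    have "cubic lam b (\<psi> u) \<in> \<Delta>" "\<phi> (cubic lam b (\<psi> u)) = lam * u"
      using fc[OF conjunct1[OF \<psi>in[OF that]]] conjunct2[OF \<psi>in[OF that]] by simp_all
    then show ?thesis using \<psi>\<phi>[of "cubic lam b (\<psi> u)"] by simp
  qed
  have iterc: "(cubic lam b ^^ k) (\<psi> u) = \<psi> (lam^k * u)" if "u \<in> ball 0 r" for k u
  proof (induction k)
    case 0 then show ?case by simp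
  next
    case (Suc k)
    then show ?case using conj[OF lamball[OF that, of k]] by (simp add: mult.assoc)
  qed
  have Dinv: "(cubic lam b ^^ k) z \<in> \<Delta>" if "z \<in> \<Delta>" for k z
    using that by (induction k) (auto simp: fc)
  have d\<phi>: "deriv \<phi> (cubic lam b z) * (lam + 2*b*z + 3*z^2) = lam * deriv \<phi> z" if z: "z \<in> \<Delta>" for z
  proof -
    have dc: "(cubic lam b has_field_derivative (lam + 2*b*z + 3*z^2)) (at z)"
      unfolding cubic_def[abs_def]
      apply (rule derivative_eq_intros refl)+
      apply (simp add: algebra_simps power2_eq_square)
      done
    have d1: "((\<lambda>z. \<phi> (cubic lam b z)) has_field_derivative deriv \<phi> (cubic lam b z) * (lam + 2*b*z + 3*z^2)) (at z)"
      by (rule DERIV_chain2[OF holomorphic_derivI[OF \<phi>hol D(1)] dc]) (use fc z in auto)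
    have d1': "((\<lambda>z. lam * \<phi> z) has_field_derivative deriv \<phi> (cubic lam b z) * (lam + 2*b*z + 3*z^2)) (at z)"
      by (rule has_field_derivative_transform_within_open[OF d1 D(1) z]) (use fc in auto)
    have d2: "((\<lambda>z. lam * \<phi> z) has_field_derivative lam * deriv \<phi> z) (at z)"
      by (rule DERIV_cmult[OF holomorphic_derivI[OF \<phi>hol D(1) z]])
    show ?thesis using DERIV_unique[OF d1' d2] .
  qed
  have \<psi>cont: "continuous_on (ball 0 r) \<psi>" by (rule holomorphic_on_imp_continuous_on[OF \<psi>hol])
  obtain t where t: "0 < t" "t < r" "\<phi> ` K \<subseteq> ball 0 t"
  proof (cases "K = {}")
    case True
    then show ?thesis using that[of "r/2"] r by auto
  next
    case False
    have "compact (\<phi> ` K)"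
      by (intro compact_continuous_image holomorphic_on_imp_continuous_on holomorphic_on_subset[OF \<phi>hol] assms(3,4))
    then have cn: "compact (norm ` \<phi> ` K)"
      by (rule compact_continuous_image[OF continuous_on_norm_id])
    have "norm ` \<phi> ` K \<noteq> {}" using False by simp
    from compact_attains_sup[OF cn this] obtain m where m: "m \<in> norm ` \<phi> ` K" "\<And>y. y \<in> norm ` \<phi> ` K \<Longrightarrow> y \<le> m"
      by blast
    have "m < r" using m(1) \<phi>r assms(4) by auto
    have "m \<ge> 0" using m(1) by auto
    show ?thesis
    proof (rule that[of "(m + r)/2"])
      show "0 < (m + r)/2" using \<open>m \<ge> 0\<close> r by simp
      show "(m + r)/2 < r" using \<open>m < r\<close> by simp
      show "\<phi> ` K \<subseteq> ball 0 ((m + r) / 2)"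
      proof
        fix x assume "x \<in> \<phi> ` K"
        then have "norm x \<le> m" using m(2) by auto
        then show "x \<in> ball 0 ((m + r) / 2)" using \<open>m < r\<close> by simp
      qed
    qed
  qed
  define t1 where "t1 = (t + r) / 2"
  have t1: "t < t1" "t1 < r" using t by (auto simp: t1_def)
  define A where "A u = deriv \<phi> (\<psi> (lam * u)) * \<psi> u" for u
  have hcomp: "(\<lambda>u. deriv \<phi> (\<psi> (lam * u))) holomorphic_on ball 0 r"
  proof -
    have h1: "(\<lambda>u. \<psi> (lam * u)) holomorphic_on ball 0 r"
    proof -
      have "(\<psi> \<circ> (\<lambda>u. lam * u)) holomorphic_on ball 0 r"
        by (rule holomorphic_on_compose_gen[OF _ \<psi>hol]) (use lamball[of _ 1] in \<open>auto intro: holomorphic_intros\<close>)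
      then show ?thesis by (simp add: o_def)
    qed
    have "((deriv \<phi>) \<circ> (\<lambda>u. \<psi> (lam * u))) holomorphic_on ball 0 r"
      by (rule holomorphic_on_compose_gen[OF h1 holomorphic_deriv[OF \<phi>hol D(1)]])
         (use \<psi>in lamball[of _ 1] in auto)
    then show ?thesis by (simp add: o_def)
  qed
  have hA: "A holomorphic_on ball 0 r"
    unfolding A_def[abs_def] by (intro holomorphic_intros hcomp \<psi>hol)
  have A0: "A 0 = 0" by (simp add: A_def \<psi>0)
  have dA0: "deriv A 0 = 1"
  proof -
    have d1: "((\<lambda>u. deriv \<phi> (\<psi> (lam * u))) has_field_derivative deriv (\<lambda>u. deriv \<phi> (\<psi> (lam * u))) 0) (at 0)"
      by (rule holomorphic_derivI[OF hcomp]) (use r in auto)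
    have d2: "(\<psi> has_field_derivative deriv \<psi> 0) (at 0)"
      by (rule holomorphic_derivI[OF \<psi>hol]) (use r in auto)
    have "(A has_field_derivative deriv (\<lambda>u. deriv \<phi> (\<psi> (lam * u))) 0 * \<psi> 0 + deriv \<psi> 0 * deriv \<phi> (\<psi> (lam * 0))) (at 0)"
      unfolding A_def[abs_def] by (rule DERIV_mult[OF d1 d2])
    moreover have "deriv \<phi> 0 * deriv \<psi> 0 = 1" using d\<psi>[OF D(3)] \<phi>0 by simp
    ultimately have "(A has_field_derivative 1) (at 0)" by (simp add: \<psi>0 mult.commute)
    then show ?thesis by (rule DERIV_imp_deriv)
  qed
  define g where "g = (\<lambda>z. if z = 0 then deriv A 0 else (A z - A 0) / (z - 0))"
  have hg: "g holomorphic_on ball 0 r" unfolding g_def by (rule pole_lemma_open[OF hA open_ball])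
  have g0: "g 0 = 1" by (simp add: g_def dA0)
  have gA: "A u = u * g u" if "u \<noteq> 0" for u using that by (simp add: g_def A0)
  obtain N where N: "N > 0" and avg: "\<And>w. norm w \<le> t \<Longrightarrow> real N / 2 \<le> Re (\<Sum>k<N. g (lam^k * w))"
    using averaging[OF hg t(1) t(2) lam1 nr g0] by blast
  have "compact (g ` cball 0 t)"
    by (intro compact_continuous_image holomorphic_on_imp_continuous_on holomorphic_on_subset[OF hg]) (use t in auto)
  then obtain Bg where Bg: "Bg > 0" "\<And>u. u \<in> cball 0 t \<Longrightarrow> norm (g u) \<le> Bg"
    using compact_imp_bounded[of "g ` cball 0 t"] unfolding bounded_pos by blast
  define BS where "BS = real N * Bg"
  have BS: "norm (\<Sum>k<N. g (lam^k * w)) \<le> BS" if "norm w \<le> t" for w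
  proof -
    have "norm (\<Sum>k<N. g (lam^k * w)) \<le> (\<Sum>k<N. norm (g (lam^k * w)))" by (rule norm_sum)
    also have "\<dots> \<le> (\<Sum>k<N. Bg)"
      by (intro sum_mono Bg(2)) (use that in \<open>simp add: norm_mult norm_power lam1\<close>)
    finally show ?thesis by (simp add: BS_def)
  qed
  define \<Phi> where "\<Phi> = (\<lambda>p::complex\<times>complex. (Fp lam b (fst p) ^^ N) (snd p))"
  define C where "C = \<psi> ` cball 0 t1"
  have cballsub: "cball 0 t1 \<subseteq> ball 0 r" using t1 by auto
  have Ccomp: "compact C" unfolding C_def
    by (rule compact_continuous_image[OF continuous_on_subset[OF \<psi>cont cballsub] compact_cball])
  have cubF: "cubic lam b = Fp lam b 0" by (rule cubic_Fp)
  define P where "P = (cubic lam b ^^ N) ` C"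
  have PD: "P \<subseteq> \<Delta>"
  proof
    fix x assume "x \<in> P"
    then obtain u where u: "u \<in> cball 0 t1" "x = (cubic lam b ^^ N) (\<psi> u)" unfolding P_def C_def by auto
    then have ub: "u \<in> ball 0 r" using t1 by simp
    show "x \<in> \<Delta>" using u(2) iterc[OF ub] \<psi>in[OF lamball[OF ub]] by simp
  qed
  have Pcomp: "compact P" unfolding P_def
  proof (rule compact_continuous_image[OF _ Ccomp])
    have "(\<lambda>z. (Fp lam b 0 ^^ N) z) holomorphic_on C" by (rule Fp_iter_hol_z)
    then show "continuous_on C (cubic lam b ^^ N)" unfolding cubF by (rule holomorphic_on_imp_continuous_on)
  qed
  obtain d where d: "d > 0" "(\<Union>x\<in>P. ball x d) \<subseteq> \<Delta>"
    using compact_subset_open_imp_ball_epsilon_subset[OF Pcomp D(1) PD] by blast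
  have uc: "uniformly_continuous_on (cball 0 1 \<times> C) \<Phi>"
    unfolding \<Phi>_def by (rule compact_uniformly_continuous[OF Fp_iter_cont compact_Times[OF compact_cball Ccomp]])
  obtain \<eta> where \<eta>: "\<eta> > 0"
    and \<eta>2: "\<And>x x'. x \<in> cball 0 1 \<times> C \<Longrightarrow> x' \<in> cball 0 1 \<times> C \<Longrightarrow> dist x' x < \<eta> \<Longrightarrow> dist (\<Phi> x') (\<Phi> x) < d"
    using uc d(1) unfolding uniformly_continuous_on_def by metis
  define \<rho>0 where "\<rho>0 = min (1/2) (\<eta>/2)"
  have \<rho>0: "\<rho>0 > 0" "\<rho>0 \<le> 1/2" "\<rho>0 < \<eta>" using \<eta> by (auto simp: \<rho>0_def)
  have tube: "(Fp lam b e ^^ N) (\<psi> w) \<in> \<Delta>" if e: "norm e \<le> \<rho>0" and w: "w \<in> cball 0 t1" for e w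
  proof -
    have psiC: "\<psi> w \<in> C" using w C_def by auto
    have m1: "(e, \<psi> w) \<in> cball 0 1 \<times> C" using e \<rho>0 psiC by auto
    have m2: "(0, \<psi> w) \<in> cball 0 1 \<times> C" using psiC by auto
    have "dist (e, \<psi> w) (0, \<psi> w) < \<eta>" using e \<rho>0 by (simp add: dist_Pair_Pair)
    then have "dist (\<Phi> (e, \<psi> w)) (\<Phi> (0, \<psi> w)) < d" using \<eta>2[OF m2 m1] by simp
    moreover have "\<Phi> (0, \<psi> w) \<in> P" unfolding \<Phi>_def P_def using psiC by (simp add: cubF)
    ultimately have "\<Phi> (e, \<psi> w) \<in> (\<Union>x\<in>P. ball x d)" by (auto simp: dist_commute)
    then have "\<Phi> (e, \<psi> w) \<in> \<Delta>" by (rule subsetD[OF d(2)])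
    then show ?thesis by (simp add: \<Phi>_def)
  qed
  define \<rho> where "\<rho> = \<rho>0 / 2"
  have \<rho>: "0 < \<rho>" "\<rho> < \<rho>0" using \<rho>0 by (auto simp: \<rho>_def)
  have key: "deriv \<phi> ((cubic lam b ^^ k) (\<psi> w)) * Dz lam b (\<psi> w) k = - (lam^k * w * (\<Sum>j<k. g (lam^j * w)))"
    if w: "w \<in> ball 0 r" "w \<noteq> 0" for k w
  proof (induction k)
    case 0 show ?case by simp
  next
    case (Suc k)
    define zk where "zk = (cubic lam b ^^ k) (\<psi> w)"
    have zk: "zk = \<psi> (lam^k * w)" using iterc[OF w(1)] zk_def by simp
    have zkD: "zk \<in> \<Delta>" using \<psi>in[OF lamball[OF w(1)]] zk by simp
    have zk1: "(cubic lam b ^^ Suc k) (\<psi> w) = cubic lam b zk" by (simp add: zk_def)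
    have zk1': "cubic lam b zk = \<psi> (lam * (lam^k * w))" using conj[OF lamball[OF w(1)]] zk by simp
    have Ak: "A (lam^k * w) = deriv \<phi> (cubic lam b zk) * zk" unfolding A_def zk1'[symmetric] zk[symmetric] ..
    have gk: "A (lam^k * w) = lam^k * w * g (lam^k * w)" using gA lam0 w(2) by simp
    have IH: "deriv \<phi> zk * Dz lam b (\<psi> w) k = - (lam^k * w * (\<Sum>j<k. g (lam^j * w)))"
      using Suc.IH unfolding zk_def .
    have Dz1: "Dz lam b (\<psi> w) (Suc k) = (lam + 2*b*zk + 3*zk^2) * Dz lam b (\<psi> w) k - lam * zk"
      by (simp add: zk_def)
    have "deriv \<phi> ((cubic lam b ^^ Suc k) (\<psi> w)) * Dz lam b (\<psi> w) (Suc k)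
        = (deriv \<phi> (cubic lam b zk) * (lam + 2*b*zk + 3*zk^2)) * Dz lam b (\<psi> w) k - lam * (deriv \<phi> (cubic lam b zk) * zk)"
      unfolding zk1 Dz1 by (simp add: algebra_simps)
    also have "\<dots> = lam * (deriv \<phi> zk * Dz lam b (\<psi> w) k) - lam * A (lam^k*w)"
      unfolding d\<phi>[OF zkD] Ak by (simp add: algebra_simps)
    also have "\<dots> = - (lam^Suc k * w * (\<Sum>j<Suc k. g (lam^j * w)))"
      unfolding IH gk by (simp add: algebra_simps)
    finally show ?case .
  qed
  define C0 where "C0 = t * BS^2 / 2 + 2 * r / \<rho>^2"
  have C0: "C0 > 0" using t r \<rho> by (simp add: C0_def add_nonneg_pos)
  define \<delta> where "\<delta> = min (\<rho>/2) (min (1 / real N) (t * real N / (4 * C0)))"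
  have \<delta>: "\<delta> > 0" using \<rho> N t C0 by (simp add: \<delta>_def)
  have est: "norm (\<phi> ((Fp lam b (of_real \<epsilon>) ^^ N) (\<psi> w))) \<le> t * (1 - \<epsilon> * real N / 4)"
    if w: "norm w = t" and \<epsilon>: "0 < \<epsilon>" "\<epsilon> < \<delta>" for w \<epsilon>
  proof -
    have wr: "w \<in> ball 0 r" using w t by simp
    have w0: "w \<noteq> 0" using w t by auto
    have wt1: "w \<in> cball 0 t1" using w t1 by simp
    define h where "h e = \<phi> ((Fp lam b e ^^ N) (\<psi> w))" for e
    have hh: "h holomorphic_on ball 0 \<rho>0"
    proof -
      have "(\<phi> \<circ> (\<lambda>e. (Fp lam b e ^^ N) (\<psi> w))) holomorphic_on ball 0 \<rho>0"
        by (rule holomorphic_on_compose_gen[OF Fp_iter_hol_e \<phi>hol]) (use tube wt1 in auto)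
      then show ?thesis by (simp add: h_def[abs_def] o_def)
    qed
    have hb: "norm (h e) \<le> r" if "e \<in> ball 0 \<rho>0" for e
      using \<phi>r[OF tube[OF _ wt1, of e]] that unfolding h_def by auto
    have iN: "(Fp lam b 0 ^^ N) (\<psi> w) = \<psi> (lam^N * w)" using iterc[OF wr] by (simp add: cubF)
    have h0: "h 0 = lam^N * w" unfolding h_def iN using \<psi>in[OF lamball[OF wr]] by simp
    define S where "S = (\<Sum>j<N. g (lam^j * w))"
    have "(h has_field_derivative deriv \<phi> ((Fp lam b 0 ^^ N) (\<psi> w)) * Dz lam b (\<psi> w) N) (at 0)"
      unfolding h_def
      by (rule DERIV_chain2[OF holomorphic_derivI[OF \<phi>hol D(1)] Fp_iter_deriv])
         (use Dinv \<psi>in[OF wr] in \<open>simp add: flip: cubF\<close>)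
    then have "(h has_field_derivative - (lam^N * w * S)) (at 0)"
      using key[OF wr w0, of N] by (simp add: S_def flip: cubF)
    then have dh: "deriv h 0 = - (lam^N * w * S)" by (rule DERIV_imp_deriv)
    have ne: "norm (of_real \<epsilon> :: complex) < \<rho>" using \<epsilon> \<delta>_def \<rho> by auto
    have tay: "norm (h (of_real \<epsilon>) - h 0 - deriv h 0 * of_real \<epsilon>) \<le> r * (\<epsilon> / \<rho>)^2 / (1 - \<epsilon> / \<rho>)"
      using taylor2_bound[OF hh hb \<rho> ne] \<epsilon> by simp
    have "\<epsilon> / \<rho> \<le> 1/2" using \<epsilon> \<rho> by (simp add: \<delta>_def field_simps)
    then have "r * (\<epsilon> / \<rho>)^2 / (1 - \<epsilon> / \<rho>) \<le> r * (\<epsilon> / \<rho>)^2 / (1/2)"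
      using r \<epsilon> \<rho> by (intro divide_left_mono mult_pos_pos) auto
    also have "\<dots> = 2 * r * \<epsilon>^2 / \<rho>^2" by (simp add: power_divide)
    finally have Rb: "norm (h (of_real \<epsilon>) - h 0 - deriv h 0 * of_real \<epsilon>) \<le> 2 * r * \<epsilon>^2 / \<rho>^2"
      using tay by linarith
    define R where "R = h (of_real \<epsilon>) - h 0 - deriv h 0 * of_real \<epsilon>"
    have hsplit: "h (of_real \<epsilon>) = lam^N * w * (1 - of_real \<epsilon> * S) + R"
      unfolding R_def h0 dh by (simp add: algebra_simps)
    have RR: "norm R \<le> 2 * r * \<epsilon>^2 / \<rho>^2" unfolding R_def by (rule Rb)
    have tri: "norm (h (of_real \<epsilon>)) \<le> norm (lam^N * w * (1 - of_real \<epsilon> * S)) + norm R"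
      unfolding hsplit by (rule norm_triangle_ineq)
    have SRe: "real N / 2 \<le> Re S" unfolding S_def using avg w by simp
    have Sb: "norm S \<le> BS" unfolding S_def using BS w by simp
    have eN: "\<epsilon> * (real N / 2) \<le> 1"
    proof -
      have "\<epsilon> \<le> 1 / real N" using \<epsilon> by (simp add: \<delta>_def)
      then have "\<epsilon> * real N \<le> 1" using N by (simp add: field_simps)
      then show ?thesis by simp
    qed
    have ob: "norm (1 - of_real \<epsilon> * S) \<le> 1 - \<epsilon> * (real N / 2) + \<epsilon>^2 * (norm S)^2 / 2"
      by (rule one_minus_bound) (use \<epsilon> eN SRe in auto)
    have "(norm S)^2 \<le> BS^2" using Sb by (simp add: power_mono)
    then have ob2: "norm (1 - of_real \<epsilon> * S) \<le> 1 - \<epsilon> * (real N / 2) + \<epsilon>^2 * BS^2 / 2"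
      using ob \<epsilon> by (smt (verit) divide_right_mono mult_left_mono zero_le_power2)
    have M1: "norm (lam^N * w * (1 - of_real \<epsilon> * S)) \<le> t * (1 - \<epsilon> * (real N / 2) + \<epsilon>^2 * BS^2 / 2)"
      unfolding norm_mult norm_power lam1 w using ob2 t by simp
    have "norm (h (of_real \<epsilon>)) \<le> t * (1 - \<epsilon> * (real N / 2) + \<epsilon>^2 * BS^2 / 2) + 2 * r * \<epsilon>^2 / \<rho>^2"
      using tri M1 RR by linarith
    also have "\<dots> = t - t * \<epsilon> * real N / 2 + \<epsilon>^2 * C0" by (simp add: C0_def algebra_simps)
    also have "\<dots> \<le> t * (1 - \<epsilon> * real N / 4)"
    proof -
      have "\<epsilon> \<le> t * real N / (4 * C0)" using \<epsilon> by (simp add: \<delta>_def)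
      then have "\<epsilon> * C0 \<le> t * real N / 4" using C0 by (simp add: field_simps)
      then have "\<epsilon> * (\<epsilon> * C0) \<le> \<epsilon> * (t * real N / 4)" using \<epsilon> by (intro mult_left_mono) auto
      then show ?thesis by (simp add: power2_eq_square algebra_simps)
    qed
    finally show ?thesis by (simp add: h_def)
  qed
  have ballsub: "ball 0 t1 \<subseteq> ball 0 r" using t1 by auto
  have main: "\<psi> ` ball 0 t \<subseteq> basin (perturbed lam b \<epsilon>)" if \<epsilon>: "0 < \<epsilon>" "\<epsilon> < \<delta>" for \<epsilon>
  proof -
    define e where "e = (of_real \<epsilon> :: complex)"
    have ne: "norm e \<le> \<rho>0" using \<epsilon> \<rho> by (simp add: e_def \<delta>_def)
    define H where "H w = \<phi> ((Fp lam b e ^^ N) (\<psi> w))" for w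
    have Hhol: "H holomorphic_on ball 0 t1"
    proof -
      have h1: "((\<lambda>z. (Fp lam b e ^^ N) z) \<circ> \<psi>) holomorphic_on ball 0 t1"
        by (rule holomorphic_on_compose_gen[OF holomorphic_on_subset[OF \<psi>hol ballsub] Fp_iter_hol_z]) auto
      have "(\<phi> \<circ> ((\<lambda>z. (Fp lam b e ^^ N) z) \<circ> \<psi>)) holomorphic_on ball 0 t1"
        by (rule holomorphic_on_compose_gen[OF h1 \<phi>hol]) (use tube[OF ne] in auto)
      then show ?thesis by (simp add: H_def[abs_def] o_def)
    qed
    have H0: "H 0 = 0" by (simp add: H_def \<psi>0 Fp_iter_zero \<phi>0)
    define q where "q = 1 - \<epsilon> * real N / 8"
    have eN1: "\<epsilon> * real N \<le> 1"
    proof -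
      have "\<epsilon> \<le> 1 / real N" using \<epsilon> by (simp add: \<delta>_def)
      then show ?thesis using N by (simp add: field_simps)
    qed
    have q: "0 < q" "q < 1" using eN1 \<epsilon> N by (auto simp: q_def)
    have Hb: "norm (H w) \<le> t * (1 - \<epsilon> * real N / 4)" if "w \<in> cball 0 t" for w
    proof (rule maximum_modulus_frontier[of H "cball 0 t"])
      show "H holomorphic_on interior (cball 0 t)"
        unfolding interior_cball by (rule holomorphic_on_subset[OF Hhol]) (use t1 in auto)
      show "continuous_on (closure (cball 0 t)) H"
        unfolding closure_closed[OF closed_cball]
        by (rule holomorphic_on_imp_continuous_on, rule holomorphic_on_subset[OF Hhol]) (use t1 in auto)
      show "bounded (cball 0 t)" by simp
      show "norm (H z) \<le> t * (1 - \<epsilon> * real N / 4)" if "z \<in> frontier (cball 0 t)" for z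
        using est[of z \<epsilon>] that \<epsilon> by (simp add: H_def e_def)
      show "w \<in> cball 0 t" by fact
    qed
    have Hq: "norm (H w) \<le> q * norm w" if w: "w \<in> ball 0 t" for w
    proof -
      define G where "G u = H (of_real t * u) / of_real (q * t)" for u
      have Ghol: "G holomorphic_on ball 0 1"
      proof -
        have tu: "norm (of_real t * u) < t1" if "norm u < 1" for u :: complex
        proof -
          have a: "t * norm u < t * 1" using that t by (intro mult_strict_left_mono) auto
          have "norm (of_real t * u) = t * norm u" using t by (simp add: norm_mult)
          then show ?thesis using a t1 by linarith
        qed
        have "(H \<circ> (\<lambda>u. of_real t * u)) holomorphic_on ball 0 1"
          by (rule holomorphic_on_compose_gen[OF _ Hhol]) (use tu in \<open>auto intro!: holomorphic_intros\<close>)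
        then show ?thesis unfolding G_def[abs_def] by (intro holomorphic_intros) (use q t in \<open>simp_all add: o_def\<close>)
      qed
      have G0: "G 0 = 0" by (simp add: G_def H0)
      have Glt: "norm (G u) < 1" if "norm u < 1" for u
      proof -
        have "of_real t * u \<in> cball 0 t" using that t by (simp add: norm_mult)
        then have "norm (H (of_real t * u)) \<le> t * (1 - \<epsilon> * real N / 4)" by (rule Hb)
        also have "\<dots> < q * t" using t \<epsilon> N by (simp add: q_def algebra_simps)
        finally have lt: "norm (H (of_real t * u)) < q * t" .
        have "norm (of_real (q * t) :: complex) = q * t" using q t by (simp only: norm_of_real) simp
        then show ?thesis using lt q t unfolding G_def norm_divide by (simp add: divide_less_eq)
      qed
      have nwt: "norm (w / of_real t) = norm w / t" using t by (simp add: norm_divide)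
      have "norm w < t" using w by simp
      then have "norm (w / of_real t) < 1" unfolding nwt using t by simp
      then have "norm (G (w / of_real t)) \<le> norm (w / of_real t)"
        using Schwarz_Lemma(1)[OF Ghol G0] Glt by blast
      then show ?thesis using t q by (simp add: G_def norm_divide norm_mult field_simps)
    qed
    have Hpsi: "(Fp lam b e ^^ N) (\<psi> w) = \<psi> (H w)" if "w \<in> ball 0 t" for w
    proof -
      have "(Fp lam b e ^^ N) (\<psi> w) \<in> \<Delta>" by (rule tube[OF ne]) (use that t1 in simp)
      then show ?thesis using \<psi>\<phi> by (simp add: H_def)
    qed
    have orbit: "\<forall>w\<in>ball 0 t. (Fp lam b e ^^ (n*N)) (\<psi> w) = \<psi> ((H^^n) w) \<and> (H^^n) w \<in> ball 0 t
                 \<and> norm ((H^^n) w) \<le> q^n * norm w" for n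
    proof (induction n)
      case 0 then show ?case by simp
    next
      case (Suc n)
      show ?case
      proof
        fix w :: complex assume w: "w \<in> ball 0 t"
        have Hw: "H w \<in> ball 0 t" using Hq[OF w] q w by simp (smt (verit) mult_left_le_one_le norm_ge_zero)
        note IH = Suc[rule_format, OF Hw]
        have "(Fp lam b e ^^ (Suc n * N)) (\<psi> w) = (Fp lam b e ^^ (n*N)) ((Fp lam b e ^^ N) (\<psi> w))"
          by (simp only: mult_Suc add.commute[of N "n*N"] funpow_add o_apply)
        also have "\<dots> = \<psi> ((H^^n) (H w))" using Hpsi[OF w] IH by simp
        also have "\<dots> = \<psi> ((H^^Suc n) w)" by (simp add: funpow_Suc_right del: funpow.simps)
        finally have e1: "(Fp lam b e ^^ (Suc n * N)) (\<psi> w) = \<psi> ((H^^Suc n) w)" .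
        have e2: "(H^^Suc n) w = (H^^n) (H w)" by (simp add: funpow_Suc_right del: funpow.simps)
        have "norm ((H^^n) (H w)) \<le> q^n * norm (H w)" using IH by simp
        also have "\<dots> \<le> q^n * (q * norm w)" using Hq[OF w] q by (intro mult_left_mono) auto
        finally have e3: "norm ((H^^Suc n) w) \<le> q^Suc n * norm w" unfolding e2 by (simp add: mult_ac)
        show "(Fp lam b e ^^ (Suc n * N)) (\<psi> w) = \<psi> ((H^^Suc n) w) \<and> (H^^Suc n) w \<in> ball 0 t
                 \<and> norm ((H^^Suc n) w) \<le> q^Suc n * norm w"
          using e1 e3 e2 IH by simp
      qed
    qed
    have \<psi>isc: "isCont \<psi> 0"
      using \<psi>cont r by (simp add: continuous_on_eq_continuous_at)
    show ?thesis
    proof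
      fix z assume "z \<in> \<psi> ` ball 0 t"
      then obtain w where w: "w \<in> ball 0 t" "z = \<psi> w" by blast
      have lim0: "(\<lambda>n. (H^^n) w) \<longlonglongrightarrow> 0"
      proof (rule Lim_null_comparison)
        show "\<forall>\<^sub>F n in sequentially. norm ((H^^n) w) \<le> q^n * norm w" using orbit w by auto
        show "(\<lambda>n. q^n * norm w) \<longlonglongrightarrow> 0"
          using tendsto_mult_left_zero[OF LIMSEQ_power_zero[of q]] tendsto_mult_right_zero[OF LIMSEQ_power_zero[of q]] q
          by auto
      qed
      have limP: "(\<lambda>n. \<psi> ((H^^n) w)) \<longlonglongrightarrow> 0"
        using isCont_tendsto_compose[OF \<psi>isc lim0] \<psi>0 by simp
      have "(\<lambda>n. (Fp lam b e ^^ n) z) \<longlonglongrightarrow> 0"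
      proof (rule residues_tendsto[OF N])
        fix j assume "j < N"
        have cj: "isCont (\<lambda>x. (Fp lam b e ^^ j) x) 0"
          using holomorphic_on_imp_continuous_on[OF Fp_iter_hol_z[where lam=lam and b=b and e=e and k=j and S=UNIV]]
          by (simp add: continuous_on_eq_continuous_at)
        have eq: "(Fp lam b e ^^ (n*N + j)) z = (Fp lam b e ^^ j) (\<psi> ((H^^n) w))" for n
        proof -
          have "(Fp lam b e ^^ (n*N + j)) z = (Fp lam b e ^^ j) ((Fp lam b e ^^ (n*N)) z)"
            by (simp only: add.commute[of "n*N" j] funpow_add o_apply)
          then show ?thesis using orbit w by simp
        qed
        show "(\<lambda>n. (Fp lam b e ^^ (n*N + j)) z) \<longlonglongrightarrow> 0"
          unfolding eq using isCont_tendsto_compose[OF cj limP] by (simp add: Fp_iter_zero)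
      qed
      then show "z \<in> basin (perturbed lam b \<epsilon>)"
        by (simp add: basin_def perturbed_Fp e_def)
    qed
  qed
  have Ksub: "K \<subseteq> \<psi> ` ball 0 t"
  proof
    fix z assume z: "z \<in> K"
    then have "\<phi> z \<in> ball 0 t" using t(3) by blast
    moreover have "\<psi> (\<phi> z) = z" using \<psi>\<phi> assms(4) z by blast
    ultimately show "z \<in> \<psi> ` ball 0 t" by (metis imageI)
  qed
  have conn: "connected (\<psi> ` ball 0 t)"
    by (rule connected_continuous_image[OF continuous_on_subset[OF \<psi>cont] connected_ball]) (use t in auto)
  have z0: "0 \<in> \<psi> ` ball 0 t" using \<psi>0 t by (metis centre_in_ball imageI)
  show ?thesis
  proof (intro exI conjI allI impI)
    show "\<delta> > 0" by fact
    fix eps assume "0 < eps \<and> eps < \<delta>"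
    then have "\<psi> ` ball 0 t \<subseteq> connected_component_set (basin (perturbed lam b eps)) 0"
      using main connected_component_maximal[OF z0 conn] by blast
    then show "K \<subseteq> immediate_basin (perturbed lam b eps)"
      using Ksub by (auto simp: immediate_basin_def)
  qed
qed

end
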